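(* Let $k,d,r,\delta$ be positive integers with $\delta\le d$, $r \ge 1$, and suppose there exists a systematic $[k+d-1,k,d]$ MDS code over $\mathbb{F}_q$. Then there exists an $(r,\delta)_i$ linear code over $\mathbb{F}_q$ of length $n = k+d-1+\left(\lceil k/r\rceil-1\right)(\delta-1)$, dimension $k$ and minimum distance $d$, i.e. an $(r,\delta)_i$ code attaining $d = n-k+1-\left(\lceil k/r\rceil-1\right)(\delta-1)$ with equality.
   Context: Coordinate $i$ of a linear code $\mathcal{C}$ of length $n$ has locality $(r,\delta)$ if there is $S_i\subseteq[n]$ with $i\in S_i$, $|S_i|\le r+\delta-1$, such that the punctured code $\mathcal{C}|_{S_i}$ (delete coordinates outside $S_i$) has minimum distance at least $\delta$. An $(r,\delta)_i$ code is a systematic $[n,k,d]$ linear code (information symbols in the first $k$ coordinates) in which all $k$ information coordinates have locality $(r,\delta)$. An MDS code is an $[N,K,D]$ code with $D=N-K+1$. *)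

theory Defs
  imports Complex_Main
begin

text \<open>Vectors of length n over a finite field 'a are modelled as functions
nat \<Rightarrow> 'a vanishing outside the coordinate set {..<n}.\<close>

definition vec_space :: "nat \<Rightarrow> (nat \<Rightarrow> 'a::zero) set" where
  "vec_space n = {x. \<forall>i\<ge>n. x i = 0}"

definition linear_code :: "nat \<Rightarrow> (nat \<Rightarrow> 'a::field) set \<Rightarrow> bool" where
  "linear_code n C \<longleftrightarrow> C \<subseteq> vec_space n \<and> (\<lambda>_. 0) \<in> C \<and>
     (\<forall>x\<in>C. \<forall>y\<in>C. (\<lambda>i. x i + y i) \<in> C) \<and>
     (\<forall>a. \<forall>x\<in>C. (\<lambda>i. a * x i) \<in> C)"

definition systematic_code :: "nat \<Rightarrow> nat \<Rightarrow> (nat \<Rightarrow> 'a::field) set \<Rightarrow> bool" where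
  "systematic_code n k C \<longleftrightarrow> k \<le> n \<and> linear_code n C \<and>
     bij_betw (\<lambda>c i. if i < k then c i else 0) C (vec_space k)"

definition weight_on :: "nat set \<Rightarrow> (nat \<Rightarrow> 'a::zero) \<Rightarrow> nat" where
  "weight_on S c = card {i\<in>S. c i \<noteq> 0}"

definition min_dist_eq :: "nat \<Rightarrow> (nat \<Rightarrow> 'a::zero) set \<Rightarrow> nat \<Rightarrow> bool" where
  "min_dist_eq n C d \<longleftrightarrow>
     (\<forall>c\<in>C. c \<noteq> (\<lambda>_. 0) \<longrightarrow> weight_on {..<n} c \<ge> d) \<and>
     (\<exists>c\<in>C. c \<noteq> (\<lambda>_. 0) \<and> weight_on {..<n} c = d)"

text \<open>The punctured code C|_S (codewords restricted to S) has minimum distance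
at least \<delta>: every codeword nonzero on S has at least \<delta> nonzero entries in S.\<close>
definition punct_dist_ge :: "(nat \<Rightarrow> 'a::zero) set \<Rightarrow> nat set \<Rightarrow> nat \<Rightarrow> bool" where
  "punct_dist_ge C S \<delta> \<longleftrightarrow>
     (\<forall>c\<in>C. (\<exists>j\<in>S. c j \<noteq> 0) \<longrightarrow> weight_on S c \<ge> \<delta>)"

definition has_locality :: "nat \<Rightarrow> (nat \<Rightarrow> 'a::zero) set \<Rightarrow> nat \<Rightarrow> nat \<Rightarrow> nat \<Rightarrow> bool" where
  "has_locality n C r \<delta> i \<longleftrightarrow>
     (\<exists>S. S \<subseteq> {..<n} \<and> i \<in> S \<and> card S \<le> r + \<delta> - 1 \<and> punct_dist_ge C S \<delta>)"

definition rdelta_i_code :: "nat \<Rightarrow> nat \<Rightarrow> nat \<Rightarrow> nat \<Rightarrow> nat \<Rightarrow> (nat \<Rightarrow> 'a::field) set \<Rightarrow> bool" where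
  "rdelta_i_code n k d r \<delta> C \<longleftrightarrow> systematic_code n k C \<and> min_dist_eq n C d \<and>
     (\<forall>i<k. has_locality n C r \<delta> i)"

end

theory Submission
  imports Defs
begin

definition proj :: "nat \<Rightarrow> (nat \<Rightarrow> 'a::zero) \<Rightarrow> nat \<Rightarrow> 'a" where
  "proj k c = (\<lambda>i. if i < k then c i else 0)"

definition grp :: "nat \<Rightarrow> nat \<Rightarrow> nat \<Rightarrow> (nat \<Rightarrow> 'a::zero) \<Rightarrow> nat \<Rightarrow> 'a" where
  "grp r k j c = (\<lambda>i. if i < k \<and> i div r = j then c i else 0)"

locale sys =
  fixes n0 k :: nat and C :: "(nat \<Rightarrow> 'a::field) set"
  assumes sc: "systematic_code n0 k C"
begin

definition enc :: "(nat \<Rightarrow> 'a) \<Rightarrow> nat \<Rightarrow> 'a" where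
  "enc = the_inv_into C (proj k)"

lemma lin: "linear_code n0 C" and kn: "k \<le> n0"
  and bij: "bij_betw (proj k) C (vec_space k)"
  using sc unfolding systematic_code_def proj_def by auto

lemma C_sub: "C \<subseteq> vec_space n0" using lin unfolding linear_code_def by auto
lemma C_zero: "(\<lambda>_. 0) \<in> C" using lin unfolding linear_code_def by auto
lemma C_add: "x \<in> C \<Longrightarrow> y \<in> C \<Longrightarrow> (\<lambda>i. x i + y i) \<in> C"
  using lin unfolding linear_code_def by auto
lemma C_smult: "x \<in> C \<Longrightarrow> (\<lambda>i. a * x i) \<in> C"
  using lin unfolding linear_code_def by auto
lemma C_out: "c \<in> C \<Longrightarrow> n0 \<le> i \<Longrightarrow> c i = 0"
  using C_sub unfolding vec_space_def by auto

lemma proj_in: "c \<in> C \<Longrightarrow> proj k c \<in> vec_space k"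
  using bij bij_betwE by blast

lemma enc_in: "y \<in> vec_space k \<Longrightarrow> enc y \<in> C"
  unfolding enc_def using bij by (metis bij_betw_def the_inv_into_into order_refl)

lemma proj_enc: "y \<in> vec_space k \<Longrightarrow> proj k (enc y) = y"
  unfolding enc_def using bij by (metis bij_betw_def f_the_inv_into_f)

lemma enc_eq: "c \<in> C \<Longrightarrow> proj k c = y \<Longrightarrow> enc y = c"
  unfolding enc_def using bij by (metis bij_betw_def the_inv_into_f_f)

lemma vs_add: "(y::nat\<Rightarrow>'a) \<in> vec_space k \<Longrightarrow> z \<in> vec_space k \<Longrightarrow> (\<lambda>i. y i + z i) \<in> vec_space k"
  unfolding vec_space_def by auto
lemma vs_smult: "(y::nat\<Rightarrow>'a) \<in> vec_space k \<Longrightarrow> (\<lambda>i. a * y i) \<in> vec_space k"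
  unfolding vec_space_def by auto

lemma enc_add: "y \<in> vec_space k \<Longrightarrow> z \<in> vec_space k \<Longrightarrow>
   enc (\<lambda>i. y i + z i) = (\<lambda>i. enc y i + enc z i)"
proof -
  assume y: "y \<in> vec_space k" and z: "z \<in> vec_space k"
  have "proj k (\<lambda>i. enc y i + enc z i) = (\<lambda>i. y i + z i)"
  proof
    fix i show "proj k (\<lambda>i. enc y i + enc z i) i = y i + z i"
      using fun_cong[OF proj_enc[OF y], of i] fun_cong[OF proj_enc[OF z], of i] y z
      unfolding proj_def vec_space_def by (auto split: if_splits)
  qed
  then show ?thesis using enc_eq C_add enc_in y z by blast
qed

lemma enc_smult: "y \<in> vec_space k \<Longrightarrow> enc (\<lambda>i. a * y i) = (\<lambda>i. a * enc y i)"
proof -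
  assume y: "y \<in> vec_space k"
  have "proj k (\<lambda>i. a * enc y i) = (\<lambda>i. a * y i)"
  proof
    fix i show "proj k (\<lambda>i. a * enc y i) i = a * y i"
      using fun_cong[OF proj_enc[OF y], of i] y
      unfolding proj_def vec_space_def by (auto split: if_splits)
  qed
  then show ?thesis using enc_eq C_smult enc_in y by blast
qed

lemma enc_zero: "enc (\<lambda>_. 0) = (\<lambda>_. 0)"
  using enc_eq[OF C_zero] unfolding proj_def by auto

lemma enc_sum: "finite J \<Longrightarrow> (\<forall>j\<in>J. y j \<in> vec_space k) \<Longrightarrow>
   enc (\<lambda>i. \<Sum>j\<in>J. y j i) = (\<lambda>i. \<Sum>j\<in>J. enc (y j) i)"
proof (induction J rule: finite_induct)
  case empty
  then show ?case using enc_zero by simp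
next
  case (insert x F)
  have s: "(\<lambda>i. \<Sum>j\<in>F. y j i) \<in> vec_space k"
    using insert(4) unfolding vec_space_def by auto
  have "enc (\<lambda>i. \<Sum>j\<in>insert x F. y j i) = enc (\<lambda>i. y x i + (\<Sum>j\<in>F. y j i))"
    using insert by simp
  also have "\<dots> = (\<lambda>i. enc (y x) i + enc (\<lambda>i. \<Sum>j\<in>F. y j i) i)"
    using enc_add[OF _ s] insert(4) by simp
  finally show ?case using insert by simp
qed

end


lemma grp_vs: "grp r k j c \<in> vec_space k"
  unfolding grp_def vec_space_def by auto

lemma dm_aux: "p < (D::nat) \<Longrightarrow> (j*D + p) div D = j \<and> (j*D + p) mod D = p"
  by simp

lemma lt_aux: "j < (m::nat) \<Longrightarrow> p < D \<Longrightarrow> j*D + p < m*D"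
proof -
  assume "j < m" "p < D"
  then have "j*D + p < Suc j * D" by simp
  also have "\<dots> \<le> m * D" using \<open>j<m\<close> by (intro mult_le_mono1) simp
  finally show ?thesis .
qed

locale sys2 = sys n0 k C for n0 k and C :: "(nat \<Rightarrow> 'a::field) set" +
  fixes r m D d :: nat
  assumes r1: "r \<ge> 1" and km: "k \<le> r * m" and m1: "m \<ge> 1" and Dd: "D + 1 \<le> d"
    and n0d: "n0 = k + d - 1" and md: "min_dist_eq n0 C d"
begin

abbreviation "N \<equiv> n0 + (m - 1) * D"

definition Phi :: "(nat \<Rightarrow> 'a) \<Rightarrow> nat \<Rightarrow> 'a" where
  "Phi c = (\<lambda>i. if i < k then c i
     else if i < k + m * D then enc (grp r k ((i - k) div D) c) (k + (i - k) mod D)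
     else if i < N then c (i - (m - 1) * D) else 0)"

lemma mD: "m * D = (m - 1) * D + D" using m1 by (cases m) auto

lemma N_ge: "k + m * D \<le> N" using mD Dd n0d by simp

lemma div_lt: "i < k \<Longrightarrow> i div r < m"
  using km r1 by (simp add: div_less_iff_less_mult mult.commute)

lemma grp_add: "grp r k j (\<lambda>i. (x::nat\<Rightarrow>'a) i + y i) = (\<lambda>i. grp r k j x i + grp r k j y i)"
  unfolding grp_def by auto
lemma grp_smult: "grp r k j (\<lambda>i. a * (x::nat\<Rightarrow>'a) i) = (\<lambda>i. a * grp r k j x i)"
  unfolding grp_def by auto

lemma Phi_add: "Phi (\<lambda>i. x i + y i) = (\<lambda>i. Phi x i + Phi y i)"
  unfolding Phi_def grp_add enc_add[OF grp_vs grp_vs] by auto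
lemma Phi_smult: "Phi (\<lambda>i. a * x i) = (\<lambda>i. a * Phi x i)"
  unfolding Phi_def grp_smult enc_smult[OF grp_vs] by auto

lemma proj_Phi: "proj k (Phi c) = proj k c"
  unfolding proj_def Phi_def by auto

lemma Phi_vs: "Phi c \<in> vec_space N"
  unfolding Phi_def vec_space_def using N_ge by auto

lemma sum_grp: "(\<lambda>i. \<Sum>j<m. grp r k j c i) = proj k c"
proof
  fix i
  show "(\<Sum>j<m. grp r k j c i) = proj k c i"
  proof (cases "i < k")
    case True
    have "(\<Sum>j<m. grp r k j c i) = (\<Sum>j<m. if i div r = j then c i else 0)"
      unfolding grp_def using True by simp
    also have "\<dots> = c i" using div_lt[OF True] by (simp add: sum.delta)
    finally show ?thesis using True unfolding proj_def by simp
  next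
    case False
    then show ?thesis unfolding grp_def proj_def by simp
  qed
qed

lemma decomp: "c \<in> C \<Longrightarrow> c i \<noteq> 0 \<Longrightarrow> \<exists>j<m. enc (grp r k j c) i \<noteq> 0"
proof -
  assume c: "c \<in> C" and ci: "c i \<noteq> 0"
  have "c = enc (proj k c)" using enc_eq[OF c refl] by simp
  also have "\<dots> = enc (\<lambda>i. \<Sum>j<m. grp r k j c i)" by (simp only: sum_grp)
  also have "\<dots> = (\<lambda>i. \<Sum>j<m. enc (grp r k j c) i)" by (rule enc_sum) (auto simp: grp_vs)
  finally have "c i = (\<Sum>j<m. enc (grp r k j c) i)" by (rule fun_cong)
  with ci show ?thesis by (metis (mono_tags, lifting) lessThan_iff sum.neutral)
qed

lemma md1: "c \<in> C \<Longrightarrow> c \<noteq> (\<lambda>_. 0) \<Longrightarrow> weight_on {..<n0} c \<ge> d"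
  using md unfolding min_dist_eq_def by auto

lemma weight_ge: assumes c: "c \<in> C" and nz: "c \<noteq> (\<lambda>_. 0)"
  shows "weight_on {..<N} (Phi c) \<ge> d"
proof -
  define J where "J i = (SOME j. j < m \<and> enc (grp r k j c) i \<noteq> 0)" for i
  define f where "f i = (if i < k then i else if i < k + D then k + J i * D + (i - k)
      else i + (m - 1) * D)" for i
  let ?A = "{i\<in>{..<n0}. c i \<noteq> 0}"
  let ?B = "{i\<in>{..<N}. Phi c i \<noteq> 0}"
  have J: "J i < m \<and> enc (grp r k (J i) c) i \<noteq> 0" if "i \<in> ?A" for i
  proof -
    have "\<exists>j. j < m \<and> enc (grp r k j c) i \<noteq> 0" using decomp[OF c] that by auto
    then show ?thesis unfolding J_def by (rule someI_ex)
  qed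
  have fB: "f i \<in> ?B" if i: "i \<in> ?A" for i
  proof (cases "i < k")
    case True then show ?thesis using i N_ge unfolding f_def Phi_def by auto
  next
    case F: False
    show ?thesis
    proof (cases "i < k + D")
      case True
      have p: "i - k < D" using True F by simp
      have lt: "J i * D + (i - k) < m * D" using lt_aux J[OF i] p by blast
      have fi: "f i = k + (J i * D + (i - k))" unfolding f_def using F True by simp
      have t1: "\<not> f i < k" "f i < k + m * D" using fi lt by auto
      have t2: "(f i - k) div D = J i" "k + (f i - k) mod D = i"
        using fi dm_aux[OF p, of "J i"] F by auto
      have "Phi c (f i) = enc (grp r k ((f i - k) div D) c) (k + (f i - k) mod D)"
        unfolding Phi_def using t1 by simp
      then have "Phi c (f i) = enc (grp r k (J i) c) i" using t2 by simp
      then show ?thesis using J[OF i] t1 N_ge by auto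
    next
      case False
      then have "\<not> i + (m - 1) * D < k + m * D" using mD by simp
      then show ?thesis using F False i mD unfolding f_def Phi_def by auto
    qed
  qed
  have R1: "f x = x" if "x < k" for x using that unfolding f_def by simp
  have R2: "f x = k + (J x * D + (x - k)) \<and> k \<le> f x \<and> f x < k + m * D"
    if "x \<in> ?A" "\<not> x < k" "x < k + D" for x
  proof -
    have "x - k < D" using that(2,3) by simp
    then have "J x * D + (x - k) < m * D" using lt_aux J[OF that(1)] by blast
    then show ?thesis using that unfolding f_def by simp
  qed
  have R3: "f x = x + (m - 1) * D \<and> k + m * D \<le> f x" if "\<not> x < k + D" for x
    using that mD unfolding f_def by simp
  have inj: "inj_on f ?A"
  proof
    fix x y assume x: "x \<in> ?A" and y: "y \<in> ?A" and e: "f x = f y"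
    consider "x < k" | "\<not> x < k" "x < k + D" | "\<not> x < k + D" by linarith
    then show "x = y"
    proof cases
      case 1
      then show ?thesis using e R1 R2[OF y] R3[of y] by (metis add_leD1 leD not_le)
    next
      case 2
      note X = R2[OF x 2]
      consider "y < k" | "\<not> y < k" "y < k + D" | "\<not> y < k + D" by linarith
      then show ?thesis
      proof cases
        case 1 then show ?thesis using e X R1 by simp
      next
        case 22: 2
        note Y = R2[OF y 22]
        have "(J x * D + (x - k)) mod D = (J y * D + (y - k)) mod D"
          using e X Y by simp
        then have "x - k = y - k" using dm_aux 2 22 by (metis add_diff_inverse_nat
              add_less_cancel_left)
        then show ?thesis using 2 22 by simp
      next
        case 3 then show ?thesis using e X R3[OF 3] by linarith
      qed
    next
      case 3
      note X = R3[OF 3]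
      consider "y < k" | "\<not> y < k" "y < k + D" | "\<not> y < k + D" by linarith
      then show ?thesis
      proof cases
        case 1 then show ?thesis using e X R1 by simp
      next
        case 2 then show ?thesis using e X R2[OF y 2] by simp
      next
        case 33: 3 then show ?thesis using e X R3[OF 33] by simp
      qed
    qed
  qed
  have "card ?A \<le> card ?B"
    by (rule card_inj_on_le[OF inj]) (use fB in auto)
  moreover have "d \<le> card ?A" using md1[OF c nz] unfolding weight_on_def .
  ultimately show ?thesis unfolding weight_on_def by simp
qed

lemma NkmD: "N - (k + m * D) = d - 1 - D" using mD Dd n0d by simp

lemma exact: assumes k0: "k > 0"
  shows "\<exists>c\<in>C. Phi c \<noteq> (\<lambda>_. 0) \<and> weight_on {..<N} (Phi c) = d"
proof -
  define e0 :: "nat \<Rightarrow> 'a" where "e0 = (\<lambda>i. if i = 0 then 1 else 0)"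
  have e0v: "e0 \<in> vec_space k" using k0 unfolding e0_def vec_space_def by auto
  define c0 where "c0 = enc e0"
  have c0C: "c0 \<in> C" unfolding c0_def using enc_in[OF e0v] .
  have c0e: "c0 i = e0 i" if "i < k" for i
    using fun_cong[OF proj_enc[OF e0v], of i] that unfolding c0_def proj_def by simp
  have c00: "c0 0 = 1" using c0e[OF k0] unfolding e0_def by simp
  then have nz: "c0 \<noteq> (\<lambda>_. 0)" by (metis one_neq_zero)
  have g: "grp r k j c0 = (if j = 0 then e0 else (\<lambda>_. 0))" for j
  proof
    fix i show "grp r k j c0 i = (if j = 0 then e0 else (\<lambda>_. 0)) i"
      using c0e e0v k0 unfolding grp_def e0_def vec_space_def by auto
  qed
  have ge: "enc (grp r k j c0) = (if j = 0 then c0 else (\<lambda>_. 0))" for j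
    using g enc_zero unfolding c0_def by simp
  have Phi0: "Phi c0 0 = 1" using k0 c00 unfolding Phi_def by simp
  have sub: "{i\<in>{..<N}. Phi c0 i \<noteq> 0} \<subseteq> {0} \<union> {k..<k+D} \<union> {k+m*D..<N}"
  proof
    fix i assume i: "i \<in> {i\<in>{..<N}. Phi c0 i \<noteq> 0}"
    show "i \<in> {0} \<union> {k..<k+D} \<union> {k+m*D..<N}"
    proof (cases "i < k")
      case True
      then have "e0 i \<noteq> 0" using i c0e unfolding Phi_def by auto
      then show ?thesis unfolding e0_def by (auto split: if_splits)
    next
      case F: False
      show ?thesis
      proof (cases "i < k + m * D")
        case True
        then have "enc (grp r k ((i - k) div D) c0) (k + (i - k) mod D) \<noteq> 0"
          using i F unfolding Phi_def by auto
        then have "(i - k) div D = 0" using ge by (auto split: if_splits)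
        moreover have "D > 0" using True F by (cases D) auto
        ultimately have "i - k < D" by (simp add: div_eq_0_iff)
        then show ?thesis using F by auto
      next
        case False then show ?thesis using i by auto
      qed
    qed
  qed
  have "card {i\<in>{..<N}. Phi c0 i \<noteq> 0} \<le> card ({0} \<union> {k..<k+D} \<union> {k+m*D..<N})"
    by (rule card_mono[OF _ sub]) auto
  also have "\<dots> \<le> card ({0::nat} \<union> {k..<k+D}) + card {k+m*D..<N}" by (rule card_Un_le)
  also have "\<dots> \<le> 1 + D + (d - 1 - D)"
    using card_Un_le[of "{0::nat}" "{k..<k+D}"] NkmD by simp
  also have "\<dots> = d" using Dd by simp
  finally have "weight_on {..<N} (Phi c0) \<le> d" unfolding weight_on_def .
  moreover have "weight_on {..<N} (Phi c0) \<ge> d" using weight_ge[OF c0C nz] .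
  moreover have "Phi c0 \<noteq> (\<lambda>_. 0)" using Phi0 by (metis one_neq_zero)
  ultimately show ?thesis using c0C by (intro bexI[of _ c0]) auto
qed

lemma locality: assumes i: "i < k"
  shows "has_locality N (Phi ` C) r (Suc D) i"
proof -
  define j where "j = i div r"
  have jm: "j < m" unfolding j_def using div_lt[OF i] .
  define G where "G = {s. s < k \<and> s div r = j}"
  define L where "L = (\<lambda>p. k + j * D + p) ` {..<D}"
  define S where "S = G \<union> L"
  have Gsub: "G \<subseteq> {j*r..<j*r+r}"
  proof
    fix s assume "s \<in> G"
    then have "s div r = j" unfolding G_def by simp
    moreover have "s div r * r \<le> s" by (rule div_times_less_eq_dividend)
    moreover have "s < r + s div r * r" using r1 by (intro dividend_less_div_times) simp
    ultimately show "s \<in> {j*r..<j*r+r}" by simp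
  qed
  have cG: "card G \<le> r" using card_mono[OF _ Gsub] by simp
  have cL: "card L \<le> D" unfolding L_def using card_image_le[of "{..<D}"] by simp
  have cS: "card S \<le> r + Suc D - 1"
    unfolding S_def using card_Un_le[of G L] cG cL by simp
  have Lb: "k + j * D + p < k + m * D" if "p < D" for p using lt_aux[OF jm that] by simp
  have "G \<subseteq> {..<N}" unfolding G_def using N_ge by auto
  moreover have "L \<subseteq> {..<N}" unfolding L_def using Lb N_ge by fastforce
  ultimately have SN: "S \<subseteq> {..<N}" unfolding S_def by blast
  have iS: "i \<in> S" unfolding S_def G_def j_def using i by simp
  have PL: "Phi c (k + j * D + p) = enc (grp r k j c) (k + p)" if "p < D" for c p
  proof -
    have "(k + j * D + p - k) div D = j" "(k + j * D + p - k) mod D = p"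
      using dm_aux[OF that, of j] by auto
    then show ?thesis unfolding Phi_def using Lb[OF that] by simp
  qed
  have pd: "punct_dist_ge (Phi ` C) S (Suc D)"
    unfolding punct_dist_ge_def
  proof (intro ballI impI)
    fix c' assume "c' \<in> Phi ` C" and ex: "\<exists>t\<in>S. c' t \<noteq> 0"
    then obtain c where c: "c \<in> C" and c': "c' = Phi c" by auto
    define e where "e = enc (grp r k j c)"
    have eC: "e \<in> C" unfolding e_def using enc_in[OF grp_vs] .
    have eG: "e s = (if s < k \<and> s div r = j then c s else 0)" if "s < k" for s
      using fun_cong[OF proj_enc[OF grp_vs[of r k j c]], of s] that
      unfolding e_def proj_def grp_def by simp
    have PG: "Phi c s = e s" if "s \<in> G" for s
      using that eG unfolding G_def Phi_def by auto
    define A where "A = {i\<in>G \<union> {k..<k+D}. e i \<noteq> 0}"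
    define g where "g i = (if i < k then i else k + j * D + (i - k))" for i
    have gB: "g x \<in> {s\<in>S. c' s \<noteq> 0}" if "x \<in> A" for x
    proof (cases "x < k")
      case True
      then have "x \<in> G" using that unfolding A_def by auto
      then show ?thesis using that PG True unfolding g_def S_def A_def c' by auto
    next
      case False
      then have x: "x - k < D" "k + (x - k) = x" using that unfolding A_def G_def by auto
      have gx: "g x = k + j * D + (x - k)" using False unfolding g_def by simp
      have gL: "g x \<in> L" unfolding L_def gx using x(1) by blast
      have "Phi c (g x) \<noteq> 0" using PL[OF x(1), of c] x that gx unfolding A_def e_def
        by simp
      then show ?thesis using gL unfolding S_def c' by blast
    qed
    have ginj: "inj_on g A"
    proof
      fix x y assume x: "x \<in> A" and y: "y \<in> A" and e: "g x = g y"
      have xr: "x < k \<or> (k \<le> x \<and> x < k + D)" "y < k \<or> (k \<le> y \<and> y < k + D)"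
        using x y unfolding A_def G_def by auto
      show "x = y" using xr e unfolding g_def by (auto split: if_splits)
    qed
    have cA: "card A \<le> weight_on S c'"
      unfolding weight_on_def by (rule card_inj_on_le[OF ginj]) (use gB S_def SN in
          \<open>auto intro: finite_subset\<close>)
    have enz: "e \<noteq> (\<lambda>_. 0)"
    proof
      assume e0: "e = (\<lambda>_. 0)"
      obtain t where t: "t \<in> S" "c' t \<noteq> 0" using ex by auto
      show False
      proof (cases "t \<in> G")
        case True then show False using PG e0 t c' by simp
      next
        case False
        then obtain p where "p < D" "t = k + j * D + p" using t unfolding S_def L_def by auto
        then show False using PL e0 t c' unfolding e_def by simp
      qed
    qed
    have wd: "d \<le> card {i\<in>{..<n0}. e i \<noteq> 0}" using md1[OF eC enz] unfolding weight_on_def .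
    have "{i\<in>{..<n0}. e i \<noteq> 0} \<subseteq> A \<union> {k+D..<n0}"
    proof
      fix x assume x: "x \<in> {i\<in>{..<n0}. e i \<noteq> 0}"
      show "x \<in> A \<union> {k+D..<n0}"
      proof (cases "x < k")
        case True
        then have "x div r = j" using eG x by (auto split: if_splits)
        then show ?thesis using True x unfolding A_def G_def by auto
      next
        case False then show ?thesis using x unfolding A_def by auto
      qed
    qed
    then have "card {i\<in>{..<n0}. e i \<noteq> 0} \<le> card (A \<union> {k+D..<n0})"
      by (intro card_mono) (auto simp: A_def G_def)
    also have "\<dots> \<le> card A + (n0 - (k + D))" using card_Un_le[of A "{k+D..<n0}"] by simp
    finally have "d \<le> card A + (n0 - (k + D))" using wd by linarith
    then have "Suc D \<le> card A" using n0d Dd by linarith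
    then show "Suc D \<le> weight_on S c'" using cA by linarith
  qed
  show ?thesis unfolding has_locality_def using SN iS cS pd by blast
qed

end


lemma proj_lam: "(\<lambda>c i. if i < k then c i else 0) = proj k"
  by (simp add: proj_def fun_eq_iff)

lemma ceil_facts: assumes "k > 0" "r \<ge> 1"
  shows "k \<le> r * nat \<lceil>real k / real r\<rceil>" "nat \<lceil>real k / real r\<rceil> \<ge> 1"
proof -
  have rp: "real r > 0" using assms by simp
  have "real k / real r \<le> of_int \<lceil>real k / real r\<rceil>" by (rule le_of_int_ceiling)
  moreover have "0 \<le> real k / real r" by simp
  then have "0 \<le> \<lceil>real k / real r\<rceil>" by (simp only: zero_le_ceiling)
  ultimately have "real k / real r \<le> real (nat \<lceil>real k / real r\<rceil>)" by simp
  then have "(real k / real r) * real r \<le> real (nat \<lceil>real k / real r\<rceil>) * real r"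
    using rp by (intro mult_right_mono) auto
  moreover have "(real k / real r) * real r = real k" using rp by simp
  ultimately have "real k \<le> real r * real (nat \<lceil>real k / real r\<rceil>)"
    by (simp add: mult.commute)
  then show "k \<le> r * nat \<lceil>real k / real r\<rceil>" by (simp only: of_nat_mult[symmetric] of_nat_le_iff)
  have "0 < real k / real r" using rp assms by simp
  then have c: "0 < \<lceil>real k / real r\<rceil>" by simp
  show "nat \<lceil>real k / real r\<rceil> \<ge> 1" using c by arith
qed

theorem mainTheorem6:
  fixes k d r \<delta> :: nat
  assumes "k > 0" "d > 0" "r \<ge> 1" "\<delta> > 0" "\<delta> \<le> d"
    and "\<exists>C :: (nat \<Rightarrow> 'a::{field,finite}) set.
           systematic_code (k + d - 1) k C \<and> min_dist_eq (k + d - 1) C d"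
  shows "\<exists>C :: (nat \<Rightarrow> 'a) set.
           rdelta_i_code (k + d - 1 + (nat \<lceil>real k / real r\<rceil> - 1) * (\<delta> - 1)) k d r \<delta> C"
proof -
  obtain C :: "(nat \<Rightarrow> 'a) set" where sc: "systematic_code (k + d - 1) k C"
    and md: "min_dist_eq (k + d - 1) C d" using assms(6) by blast
  interpret S: sys2 "k + d - 1" k C r "nat \<lceil>real k / real r\<rceil>" "\<delta> - 1" d
    using sc md ceil_facts[OF assms(1,3)] assms
    by unfold_locales (auto simp: sys_def)
  let ?N = "k + d - 1 + (nat \<lceil>real k / real r\<rceil> - 1) * (\<delta> - 1)"
  let ?C = "S.Phi ` C"
  have P0: "S.Phi (\<lambda>_. 0) = (\<lambda>_. 0)"
    using S.Phi_smult[of 0 "\<lambda>_. 0"] by simp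
  have lc: "linear_code ?N ?C"
    unfolding linear_code_def
  proof (intro conjI ballI allI)
    show "?C \<subseteq> vec_space ?N" using S.Phi_vs by auto
    show "(\<lambda>_. 0) \<in> ?C" using image_eqI[of "\<lambda>_. 0" S.Phi "\<lambda>_. 0", OF P0[symmetric] S.C_zero] .
  next
    fix x y assume "x \<in> ?C" "y \<in> ?C"
    then obtain x' y' where h: "x' \<in> C" "y' \<in> C" "x = S.Phi x'" "y = S.Phi y'" by auto
    then have "(\<lambda>i. x i + y i) = S.Phi (\<lambda>i. x' i + y' i)" using S.Phi_add[of x' y'] by simp
    then show "(\<lambda>i. x i + y i) \<in> ?C" using S.C_add[OF h(1,2)] by blast
  next
    fix a x assume "x \<in> ?C"
    then obtain x' where h: "x' \<in> C" "x = S.Phi x'" by auto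
    then have "(\<lambda>i. a * x i) = S.Phi (\<lambda>i. a * x' i)" using S.Phi_smult[of a x'] by simp
    then show "(\<lambda>i. a * x i) \<in> ?C" using S.C_smult[OF h(1)] by blast
  qed
  have bj: "bij_betw (proj k) ?C (vec_space k)"
    unfolding bij_betw_def
  proof
    show "inj_on (proj k) ?C"
    proof
      fix x y assume "x \<in> ?C" "y \<in> ?C" and e: "proj k x = proj k y"
      then obtain x' y' where xy: "x' \<in> C" "y' \<in> C" "x = S.Phi x'" "y = S.Phi y'" by auto
      then have "proj k x' = proj k y'" using e S.proj_Phi by simp
      then have "x' = y'" using S.bij xy unfolding bij_betw_def inj_on_def by blast
      then show "x = y" using xy by simp
    qed
    have "proj k ` ?C = proj k ` C" unfolding image_image S.proj_Phi ..
    then show "proj k ` ?C = vec_space k" using S.bij unfolding bij_betw_def by simp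
  qed
  have sys': "systematic_code ?N k ?C"
    unfolding systematic_code_def proj_lam using lc bj S.kn by simp
  have mde: "min_dist_eq ?N ?C d"
    unfolding min_dist_eq_def
  proof
    show "\<forall>c\<in>?C. c \<noteq> (\<lambda>_. 0) \<longrightarrow> d \<le> weight_on {..<?N} c"
    proof (intro ballI impI)
      fix c assume "c \<in> ?C" "c \<noteq> (\<lambda>_. 0)"
      then obtain c' where "c' \<in> C" "c = S.Phi c'" by auto
      then show "d \<le> weight_on {..<?N} c" using S.weight_ge P0 \<open>c \<noteq> (\<lambda>_. 0)\<close> by blast
    qed
    show "\<exists>c\<in>?C. c \<noteq> (\<lambda>_. 0) \<and> weight_on {..<?N} c = d"
      using S.exact[OF assms(1)] by blast
  qed
  have loc: "\<forall>i<k. has_locality ?N ?C r \<delta> i"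
  proof (intro allI impI)
    fix i assume "i < k"
    moreover have "Suc (\<delta> - 1) = \<delta>" using assms(4) by simp
    ultimately show "has_locality ?N ?C r \<delta> i" using S.locality by metis
  qed
  show ?thesis unfolding rdelta_i_code_def using sys' mde loc by blast
qed

end
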